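(* Let $m,n$ be positive integers and let $\lambda,\mu,\nu$ be partitions of the same positive integer $N$ with $\ell(\mu)\le m$, $\ell(\nu)\le n$, $\ell(\lambda)\le mn$. Then $\mathbf b^{m,n}(\lambda,\mu,\nu;Id)=\mathbf 0$ if and only if $$\mu_u=\lambda_u+\sum_{i=m+(u-1)(n-1)+1}^{m+u(n-1)}\lambda_i\quad(u=1,\dots,m),\qquad \nu_1=\sum_{i=1}^m\lambda_i,\qquad \nu_v=\sum_{i=0}^{m-1}\lambda_{m+(n-1)i+v-1}\quad(v=2,\dots,n).$$
   Context: Partitions are padded with zeros: $\lambda=(\lambda_1,\dots,\lambda_{mn})$, $\mu=(\mu_1,\dots,\mu_m)$, $\nu=(\nu_1,\dots,\nu_n)$. Variables $s_0,\dots,s_{m-1},t_1,\dots,t_{n-2}$; $T=t_1\cdots t_{n-2}$. Monomials $x_i=s_1\cdots s_iT^i$ ($1\le i\le m-1$), $y_j=s_0s_1\cdots s_{m-1}T^{m-1}t_1\cdots t_{j-1}$ ($1\le j\le n-1$). For a monomial $M$, $e(M)\in\mathbb Z^{m+n-2}$ is its exponent vector with coordinates ordered $s_0,\dots,s_{m-1},t_1,\dots,t_{n-2}$. Let $(z_1,\dots,z_{mn})=(1,x_1,\dots,x_{m-1},y_1,\dots,y_{n-1},x_1y_1,\dots,x_1y_{n-1},x_2y_1,\dots,x_{m-1}y_{n-1})$. Then $\mathbf b^{m,n}(\lambda,\mu,\nu;Id)=e\big(\prod_{i=1}^{m-1}x_i^{\mu_{i+1}}\prod_{j=1}^{n-1}y_j^{\nu_{j+1}}\big)-e\big(\prod_{i=1}^{mn}z_i^{\lambda_i}\big)$.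 *)

theory Defs
  imports Main
begin

text \<open>Exponent vectors are represented as functions nat => int (coordinate c).
  Coordinate k (0 <= k < m) is the exponent of s_k; coordinate m + j - 1
  (1 <= j <= n-2) is the exponent of t_j; all other coordinates are 0.
  Multiplication of monomials corresponds to adding exponent vectors.\<close>

definition sv :: "nat \<Rightarrow> nat \<Rightarrow> int" where
  "sv k c = (if c = k then 1 else 0)"

definition tv :: "nat \<Rightarrow> nat \<Rightarrow> nat \<Rightarrow> int" where
  "tv m j c = sv (m + j - 1) c"

text \<open>e(T), T = t_1 ... t_{n-2}\<close>
definition eT :: "nat \<Rightarrow> nat \<Rightarrow> nat \<Rightarrow> int" where
  "eT m n c = (\<Sum>j=1..n-2. tv m j c)"

text \<open>e(x_i), x_i = s_1 ... s_i T^i\<close>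
definition ex :: "nat \<Rightarrow> nat \<Rightarrow> nat \<Rightarrow> nat \<Rightarrow> int" where
  "ex m n i c = (\<Sum>k=1..i. sv k c) + int i * eT m n c"

text \<open>e(y_j), y_j = s_0 s_1 ... s_{m-1} T^{m-1} t_1 ... t_{j-1}\<close>
definition ey :: "nat \<Rightarrow> nat \<Rightarrow> nat \<Rightarrow> nat \<Rightarrow> int" where
  "ey m n j c = (\<Sum>k<m. sv k c) + int (m - 1) * eT m n c + (\<Sum>l=1..j-1. tv m l c)"

text \<open>e(z_k) for 1 <= k <= mn, where
  (z_1,...,z_mn) = (1, x_1..x_{m-1}, y_1..y_{n-1}, x_1 y_1, ..., x_1 y_{n-1}, x_2 y_1, ..., x_{m-1} y_{n-1}).\<close>
definition ez :: "nat \<Rightarrow> nat \<Rightarrow> nat \<Rightarrow> nat \<Rightarrow> int" where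
  "ez m n k c =
     (if k = 1 then 0
      else if k \<le> m then ex m n (k - 1) c
      else if k \<le> m + n - 1 then ey m n (k - m) c
      else (let r = k - (m + n - 1) - 1
            in ex m n (r div (n - 1) + 1) c + ey m n (r mod (n - 1) + 1) c))"

text \<open>b^{m,n}(lambda, mu, nu; Id), partitions 1-indexed (lam i is lambda_i).\<close>
definition bvec :: "nat \<Rightarrow> nat \<Rightarrow> (nat \<Rightarrow> nat) \<Rightarrow> (nat \<Rightarrow> nat) \<Rightarrow> (nat \<Rightarrow> nat) \<Rightarrow> nat \<Rightarrow> int" where
  "bvec m n lam mu nu c =
     (\<Sum>i=1..m-1. int (mu (i + 1)) * ex m n i c)
   + (\<Sum>j=1..n-1. int (nu (j + 1)) * ey m n j c)
   - (\<Sum>k=1..m*n. int (lam k) * ez m n k c)"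

definition is_partition :: "nat \<Rightarrow> nat \<Rightarrow> (nat \<Rightarrow> nat) \<Rightarrow> bool" where
  "is_partition N L lam \<longleftrightarrow>
     (\<forall>i\<ge>1. lam (Suc i) \<le> lam i) \<and> (\<forall>i>L. lam i = 0) \<and> (\<Sum>i=1..L. lam i) = N"

end

theory Submission
  imports Defs
begin


lemma sv_sum: "finite A \<Longrightarrow> (\<Sum>k\<in>A. sv k c) = (if c \<in> A then 1 else 0)"
  unfolding sv_def by simp

lemma ex0[simp]: "ex m n 0 c = 0" by (simp add: ex_def)

lemma eT_lt: "c < m \<Longrightarrow> eT m n c = 0"
  unfolding eT_def tv_def sv_def by (intro sum.neutral) auto

lemma eT_t: "1 \<le> l \<Longrightarrow> l \<le> n - 2 \<Longrightarrow> eT m n (m + l - 1) = 1"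
proof -
  assume a: "1 \<le> l" "l \<le> n - 2"
  have "eT m n (m + l - 1) = (\<Sum>j=1..n-2. if l = j then 1 else 0)"
    unfolding eT_def tv_def sv_def using a by (intro sum.cong) auto
  also have "\<dots> = 1" using a by simp
  finally show ?thesis .
qed

lemma tv_sum_lt: "c < m \<Longrightarrow> (\<Sum>l=1..J. sv (m + l - 1) c) = 0"
  unfolding sv_def by (intro sum.neutral) auto

lemma tv_sum_t: "1 \<le> l \<Longrightarrow> (\<Sum>la=1..J. sv (m + la - 1) (m + l - 1)) = (if l \<le> J then 1 else 0)"
proof -
  assume a: "1 \<le> l"
  have "(\<Sum>la=1..J. sv (m + la - 1) (m + l - 1)) = (\<Sum>la=1..J. if l = la then 1 else 0)"
    unfolding sv_def using a by (intro sum.cong) auto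
  also have "\<dots> = (if l \<le> J then 1 else 0)" using a by simp
  finally show ?thesis .
qed

lemma ex_at0: "m > 0 \<Longrightarrow> ex m n i 0 = 0"
  unfolding ex_def by (simp add: sv_sum eT_lt[of 0])

lemma ey_at0: "m > 0 \<Longrightarrow> j \<ge> 1 \<Longrightarrow> ey m n j 0 = 1"
  unfolding ey_def using tv_sum_lt[of 0 m] by (simp add: sv_sum eT_lt tv_def)

lemma ex_atk: "1 \<le> k \<Longrightarrow> k < m \<Longrightarrow> ex m n i k = (if k \<le> i then 1 else 0)"
  unfolding ex_def by (simp add: sv_sum eT_lt)

lemma ey_atk: "k < m \<Longrightarrow> ey m n j k = 1"
  unfolding ey_def using tv_sum_lt[of k m] by (simp add: sv_sum eT_lt tv_def)

lemma ey_att: "1 \<le> l \<Longrightarrow> l \<le> n - 2 \<Longrightarrow> ey m n j (m + l - 1) = int (m - 1) + (if l < j then 1 else 0)"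
  unfolding ey_def using eT_t[of l n m] tv_sum_t[where l=l and J="j-1" and m=m] by (auto simp add: sv_sum tv_def)

lemma indep:
  fixes \<alpha> \<beta> :: "nat \<Rightarrow> int"
  assumes m0: "m > 0" and n0: "n > 0"
    and H: "\<forall>c. (\<Sum>i=1..m-1. \<alpha> i * ex m n i c) + (\<Sum>j=1..n-1. \<beta> j * ey m n j c) = 0"
  shows "(\<forall>i\<in>{1..m-1}. \<alpha> i = 0) \<and> (\<forall>j\<in>{1..n-1}. \<beta> j = 0)"
proof -
  have B0: "(\<Sum>j=1..n-1. \<beta> j) = 0" using H[rule_format, of 0] m0 by (simp add: ex_at0 ey_at0)
  have S: "(\<Sum>i=k..m-1. \<alpha> i) = 0" if "k \<ge> 1" for k
  proof (cases "k < m")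
    case True
    have "(\<Sum>i=1..m-1. \<alpha> i * ex m n i k) = (\<Sum>i=1..m-1. if k \<le> i then \<alpha> i else 0)"
      by (intro sum.cong) (simp_all add: ex_atk[OF that True])
    also have "\<dots> = (\<Sum>i\<in>{i\<in>{1..m-1}. k \<le> i}. \<alpha> i)" by (rule sum.inter_filter[symmetric]) simp
    also have "{i\<in>{1..m-1}. k \<le> i} = {k..m-1}" using that by auto
    finally have "(\<Sum>i=1..m-1. \<alpha> i * ex m n i k) = (\<Sum>i=k..m-1. \<alpha> i)" .
    moreover have "(\<Sum>j=1..n-1. \<beta> j * ey m n j k) = 0" using B0 True by (simp add: ey_atk)
    ultimately show ?thesis using H[rule_format, of k] by simp
  next
    case False then show ?thesis using m0 by simp
  qed
  have A: "\<alpha> i = 0" if "i \<in> {1..m-1}" for i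
  proof -
    have "(\<Sum>i'=i..m-1. \<alpha> i') = \<alpha> i + (\<Sum>i'=Suc i..m-1. \<alpha> i')"
      using that by (simp add: sum.atLeast_Suc_atMost)
    then show ?thesis using S[of i] S[of "Suc i"] that by simp
  qed
  have T: "(\<Sum>j=Suc l..n-1. \<beta> j) = 0" for l
  proof (cases "l = 0")
    case True then show ?thesis using B0 by simp
  next
    case l0: False
    show ?thesis
    proof (cases "l \<le> n-2")
      case True
      have "(\<Sum>i=1..m-1. \<alpha> i * ex m n i (m+l-1)) = 0" using A by simp
      moreover have "(\<Sum>j=1..n-1. \<beta> j * ey m n j (m+l-1))
          = (\<Sum>j=1..n-1. int (m-1) * \<beta> j + (if l < j then \<beta> j else 0))"
      proof (intro sum.cong refl)
        fix j
        have "ey m n j (m+l-1) = int (m - 1) + (if l < j then 1 else 0)"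
          using ey_att[of l n m j] l0 True by simp
        then show "\<beta> j * ey m n j (m+l-1) = int (m-1) * \<beta> j + (if l < j then \<beta> j else 0)"
          by (simp add: distrib_left mult.commute)
      qed
      moreover have "\<dots> = int (m-1) * (\<Sum>j=1..n-1. \<beta> j) + (\<Sum>j\<in>{j\<in>{1..n-1}. l < j}. \<beta> j)"
        by (simp add: sum.distrib sum_distrib_left sum.inter_filter[symmetric])
      moreover have "{j\<in>{1..n-1}. l < j} = {Suc l..n-1}" by auto
      ultimately show ?thesis using H[rule_format, of "m+l-1"] B0 by simp
    next
      case False then show ?thesis by simp
    qed
  qed
  have Bz: "\<beta> j = 0" if "j \<in> {1..n-1}" for j
  proof -
    have "(\<Sum>i'=j..n-1. \<beta> i') = \<beta> j + (\<Sum>i'=Suc j..n-1. \<beta> i')"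
      using that by (simp add: sum.atLeast_Suc_atMost)
    then show ?thesis using T[of "j-1"] T[of j] that by simp
  qed
  show ?thesis using A Bz by blast
qed



lemma blocks:
  fixes g :: "nat \<Rightarrow> 'a::comm_monoid_add"
  shows "(\<Sum>k=a+1..a+p*q. g k) = (\<Sum>i<p. \<Sum>j=1..q. g (a+i*q+j))"
proof (induction p)
  case 0 then show ?case by simp
next
  case (Suc p)
  have "(\<Sum>k=a+1..a+Suc p*q. g k) = (\<Sum>k=a+1..(a+p*q)+q. g k)" by (simp add: algebra_simps)
  also have "\<dots> = (\<Sum>k=a+1..a+p*q. g k) + (\<Sum>k=(a+p*q)+1..(a+p*q)+q. g k)"
    by (rule sum.ub_add_nat) simp
  also have "(\<Sum>k=(a+p*q)+1..(a+p*q)+q. g k) = (\<Sum>j=1..q. g (a+p*q+j))"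
    using sum.shift_bounds_cl_nat_ivl[of g 1 "a+p*q" q] by (simp add: add.commute)
  finally show ?case using Suc by simp
qed

lemma shiftsum:
  fixes g :: "nat \<Rightarrow> 'a::comm_monoid_add"
  shows "(\<Sum>k=a+1..a+q. g k) = (\<Sum>j=1..q. g (a+j))"
  using blocks[of g a 1 q] by simp

lemma ez_row: "i < m \<Longrightarrow> ez m n (Suc i) c = ex m n i c"
  unfolding ez_def by auto

lemma ez_blk:
  assumes "m > 0" "i < m" "1 \<le> j" "j \<le> n - 1"
  shows "ez m n (m+i*(n-1)+j) c = ex m n i c + ey m n j c"
proof (cases i)
  case 0
  then show ?thesis using assms unfolding ez_def by auto
next
  case (Suc i')
  obtain q j' where q: "n = Suc q" "j = Suc j'" using assms by (cases n; cases j) auto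
  have jq: "j' < q" using assms q by simp
  let ?K = "m+i*(n-1)+j"
  have K1: "?K \<noteq> 1" "\<not> ?K \<le> m" "\<not> ?K \<le> m + n - 1" using q Suc assms by auto
  have r: "?K - (m + n - 1) - 1 = i'*q + j'" using q Suc by simp
  have d: "(i'*q + j') div (n-1) = i'" "(i'*q + j') mod (n-1) = j'" using q jq by simp_all
  have "ez m n ?K c = ex m n ((i'*q + j') div (n-1) + 1) c + ey m n ((i'*q + j') mod (n-1) + 1) c"
    unfolding ez_def using K1 r by (simp only: if_False Let_def)
  then show ?thesis using d q Suc by simp
qed

definition Rw :: "nat \<Rightarrow> nat \<Rightarrow> (nat \<Rightarrow> nat) \<Rightarrow> nat \<Rightarrow> int" where
  "Rw m n lam i = int (lam (Suc i)) + (\<Sum>j=1..n-1. int (lam (m+i*(n-1)+j)))"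
definition Cw :: "nat \<Rightarrow> nat \<Rightarrow> (nat \<Rightarrow> nat) \<Rightarrow> nat \<Rightarrow> int" where
  "Cw m n lam j = (\<Sum>i<m. int (lam (m+i*(n-1)+j)))"

lemma mn_split: "(n::nat) > 0 \<Longrightarrow> (m::nat) * n = m + m * (n-1)"
proof -
  assume "n > 0"
  then have "m * n = m * Suc (n-1)" by simp
  then show ?thesis by simp
qed

lemma lam_ez:
  assumes m0: "m > 0" and n0: "n > 0"
  shows "(\<Sum>k=1..m*n. int (lam k) * ez m n k c)
     = (\<Sum>i<m. Rw m n lam i * ex m n i c) + (\<Sum>j=1..n-1. Cw m n lam j * ey m n j c)"
proof -
  let ?f = "\<lambda>k. int (lam k) * ez m n k c"
  have "(\<Sum>k=1..m*n. ?f k) = (\<Sum>k=1..m + m*(n-1). ?f k)" using mn_split[OF n0] by simp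
  also have "\<dots> = (\<Sum>k=1..m. ?f k) + (\<Sum>k=m+1..m+m*(n-1). ?f k)"
    by (rule sum.ub_add_nat) simp
  also have "(\<Sum>k=1..m. ?f k) = (\<Sum>i<m. int (lam (Suc i)) * ex m n i c)"
    by (simp add: sum.atLeast1_atMost_eq ez_row)
  also have "(\<Sum>k=m+1..m+m*(n-1). ?f k) = (\<Sum>i<m. \<Sum>j=1..n-1. ?f (m+i*(n-1)+j))"
    by (rule blocks)
  also have "\<dots> = (\<Sum>i<m. \<Sum>j=1..n-1. int (lam (m+i*(n-1)+j)) * ex m n i c
                       + int (lam (m+i*(n-1)+j)) * ey m n j c)"
  proof (intro sum.cong refl)
    fix i j assume "i \<in> {..<m}" "j \<in> {1..n-1}"
    then show "?f (m+i*(n-1)+j) = int (lam (m+i*(n-1)+j)) * ex m n i c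
                       + int (lam (m+i*(n-1)+j)) * ey m n j c"
      using ez_blk[of m i j n c] m0 by (simp add: distrib_left)
  qed
  also have "\<dots> = (\<Sum>i<m. (\<Sum>j=1..n-1. int (lam (m+i*(n-1)+j))) * ex m n i c)
                  + (\<Sum>j=1..n-1. Cw m n lam j * ey m n j c)"
  proof -
    have 1: "(\<Sum>i<m. \<Sum>j=1..n-1. int (lam (m+i*(n-1)+j)) * ex m n i c
                       + int (lam (m+i*(n-1)+j)) * ey m n j c)
        = (\<Sum>i<m. \<Sum>j=1..n-1. int (lam (m+i*(n-1)+j)) * ex m n i c)
          + (\<Sum>i<m. \<Sum>j=1..n-1. int (lam (m+i*(n-1)+j)) * ey m n j c)"
      by (simp only: sum.distrib)
    have 2: "(\<Sum>i<m. \<Sum>j=1..n-1. int (lam (m+i*(n-1)+j)) * ex m n i c)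
        = (\<Sum>i<m. (\<Sum>j=1..n-1. int (lam (m+i*(n-1)+j))) * ex m n i c)"
      by (simp only: sum_distrib_right)
    have 3: "(\<Sum>i<m. \<Sum>j=1..n-1. int (lam (m+i*(n-1)+j)) * ey m n j c)
        = (\<Sum>j=1..n-1. \<Sum>i<m. int (lam (m+i*(n-1)+j)) * ey m n j c)"
      by (rule sum.swap)
    have 4: "\<dots> = (\<Sum>j=1..n-1. Cw m n lam j * ey m n j c)"
      unfolding Cw_def by (simp only: sum_distrib_right)
    show ?thesis using 1 2 3 4 by simp
  qed
  finally show ?thesis by (simp add: Rw_def distrib_right sum.distrib)
qed

lemma lam_tot:
  assumes n0: "n > 0"
  shows "(\<Sum>k=1..m*n. int (lam k)) = (\<Sum>i<m. Rw m n lam i)"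
    and "(\<Sum>k=1..m*n. int (lam k)) = (\<Sum>k=1..m. int (lam k)) + (\<Sum>j=1..n-1. Cw m n lam j)"
proof -
  let ?f = "\<lambda>k. int (lam k)"
  have "(\<Sum>k=1..m*n. ?f k) = (\<Sum>k=1..m + m*(n-1). ?f k)" using mn_split[OF n0] by simp
  also have "\<dots> = (\<Sum>k=1..m. ?f k) + (\<Sum>k=m+1..m+m*(n-1). ?f k)"
    by (rule sum.ub_add_nat) simp
  also have "(\<Sum>k=m+1..m+m*(n-1). ?f k) = (\<Sum>i<m. \<Sum>j=1..n-1. ?f (m+i*(n-1)+j))"
    by (rule blocks)
  finally have E: "(\<Sum>k=1..m*n. ?f k) = (\<Sum>k=1..m. ?f k) + (\<Sum>i<m. \<Sum>j=1..n-1. ?f (m+i*(n-1)+j))" .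
  then show "(\<Sum>k=1..m*n. ?f k) = (\<Sum>i<m. Rw m n lam i)"
    by (simp add: Rw_def sum.distrib sum.atLeast1_atMost_eq)
  show "(\<Sum>k=1..m*n. ?f k) = (\<Sum>k=1..m. ?f k) + (\<Sum>j=1..n-1. Cw m n lam j)"
  proof -
    have "(\<Sum>i<m. \<Sum>j=1..n-1. ?f (m+i*(n-1)+j)) = (\<Sum>j=1..n-1. \<Sum>i<m. ?f (m+i*(n-1)+j))"
      by (rule sum.swap)
    then show ?thesis using E unfolding Cw_def by simp
  qed
qed

lemma sum_shift0:
  fixes f :: "nat \<Rightarrow> 'a::comm_monoid_add"
  shows "m > 0 \<Longrightarrow> (\<Sum>i<m. f i) = f 0 + (\<Sum>i=1..m-1. f i)"
  by (cases m) (simp_all only: sum.lessThan_Suc_shift, simp_all add: sum.atLeast1_atMost_eq)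

lemma bvec_eq:
  assumes m0: "m > 0" and n0: "n > 0"
  shows "bvec m n lam mu nu c = (\<Sum>i=1..m-1. (int (mu (i+1)) - Rw m n lam i) * ex m n i c)
     + (\<Sum>j=1..n-1. (int (nu (j+1)) - Cw m n lam j) * ey m n j c)"
  unfolding bvec_def lam_ez[OF m0 n0] sum_shift0[OF m0, of "\<lambda>i. Rw m n lam i * ex m n i c"]
  by (simp add: left_diff_distrib sum_subtractf)



theorem mainTheorem3:
  fixes m n N :: nat and lam mu nu :: "nat \<Rightarrow> nat"
  assumes "m > 0" and "n > 0" and "N > 0"
    and "is_partition N (m * n) lam"
    and "is_partition N m mu"
    and "is_partition N n nu"
  shows "(\<forall>c. bvec m n lam mu nu c = 0) \<longleftrightarrow>
     ((\<forall>u\<in>{1..m}. mu u = lam u + (\<Sum>i=m+(u-1)*(n-1)+1..m+u*(n-1). lam i))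
      \<and> nu 1 = (\<Sum>i=1..m. lam i)
      \<and> (\<forall>v\<in>{2..n}. nu v = (\<Sum>i=0..m-1. lam (m + (n-1)*i + v - 1))))"
proof -
  note m0 = assms(1) and n0 = assms(2)
  have tl: "(\<Sum>k=1..m*n. int (lam k)) = int N" and tm: "(\<Sum>k=1..m. int (mu k)) = int N"
    and tn: "(\<Sum>k=1..n. int (nu k)) = int N"
    using assms(4,5,6) unfolding is_partition_def by (simp_all flip: of_nat_sum)
  define \<alpha> where "\<alpha> i = int (mu (i+1)) - Rw m n lam i" for i
  define \<beta> where "\<beta> j = int (nu (j+1)) - Cw m n lam j" for j
  have L: "(\<forall>c. bvec m n lam mu nu c = 0) \<longleftrightarrow> (\<forall>i\<in>{1..m-1}. \<alpha> i = 0) \<and> (\<forall>j\<in>{1..n-1}. \<beta> j = 0)"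
  proof
    assume "\<forall>c. bvec m n lam mu nu c = 0"
    then show "(\<forall>i\<in>{1..m-1}. \<alpha> i = 0) \<and> (\<forall>j\<in>{1..n-1}. \<beta> j = 0)"
      using indep[OF m0 n0, of \<alpha> \<beta>] unfolding \<alpha>_def \<beta>_def by (simp add: bvec_eq[OF m0 n0])
  next
    assume "(\<forall>i\<in>{1..m-1}. \<alpha> i = 0) \<and> (\<forall>j\<in>{1..n-1}. \<beta> j = 0)"
    then show "\<forall>c. bvec m n lam mu nu c = 0"
      unfolding \<alpha>_def \<beta>_def by (simp add: bvec_eq[OF m0 n0])
  qed
  have mu_split: "(\<Sum>k=1..m. int (mu k)) = int (mu 1) + (\<Sum>i=1..m-1. int (mu (i+1)))"
    using sum_shift0[OF m0, of "\<lambda>i. int (mu (Suc i))"] by (simp add: sum.atLeast1_atMost_eq)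
  have R_split: "(\<Sum>i<m. Rw m n lam i) = Rw m n lam 0 + (\<Sum>i=1..m-1. Rw m n lam i)"
    by (rule sum_shift0[OF m0])
  have nu_split: "(\<Sum>k=1..n. int (nu k)) = int (nu 1) + (\<Sum>j=1..n-1. int (nu (j+1)))"
    using sum_shift0[OF n0, of "\<lambda>i. int (nu (Suc i))"] by (simp add: sum.atLeast1_atMost_eq)
  have T1: "(\<Sum>i<m. Rw m n lam i) = int N" using lam_tot(1)[OF n0, where m=m and lam=lam] tl by simp
  have T2: "(\<Sum>k=1..m. int (lam k)) + (\<Sum>j=1..n-1. Cw m n lam j) = int N"
    using lam_tot(2)[OF n0, where m=m and lam=lam] tl by simp
  have U: "(\<forall>u\<in>{1..m}. mu u = lam u + (\<Sum>i=m+(u-1)*(n-1)+1..m+u*(n-1). lam i))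
        \<longleftrightarrow> (\<forall>i<m. int (mu (i+1)) = Rw m n lam i)"
  proof -
    have e: "(mu (Suc i) = lam (Suc i) + (\<Sum>k=m+(Suc i-1)*(n-1)+1..m+Suc i*(n-1). lam k))
           \<longleftrightarrow> int (mu (i+1)) = Rw m n lam i" for i
    proof -
      have "(\<Sum>k=m+(Suc i-1)*(n-1)+1..m+Suc i*(n-1). lam k) = (\<Sum>k=(m+i*(n-1))+1..(m+i*(n-1))+(n-1). lam k)"
        by (simp only: diff_Suc_1 mult_Suc add_ac)
      also have "\<dots> = (\<Sum>j=1..n-1. lam (m+i*(n-1)+j))" by (rule shiftsum)
      finally show ?thesis unfolding Rw_def by (simp flip: of_nat_sum of_nat_add)
    qed
    show ?thesis
    proof
      assume H: "\<forall>u\<in>{1..m}. mu u = lam u + (\<Sum>i=m+(u-1)*(n-1)+1..m+u*(n-1). lam i)"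
      show "\<forall>i<m. int (mu (i+1)) = Rw m n lam i"
      proof (intro allI impI)
        fix i assume "i < m"
        then show "int (mu (i+1)) = Rw m n lam i" using H[rule_format, of "Suc i"] e[of i] by simp
      qed
    next
      assume H: "\<forall>i<m. int (mu (i+1)) = Rw m n lam i"
      show "\<forall>u\<in>{1..m}. mu u = lam u + (\<Sum>i=m+(u-1)*(n-1)+1..m+u*(n-1). lam i)"
      proof
        fix u assume u: "u \<in> {1..m}"
        then obtain i where i: "u = Suc i" "i < m" by (cases u) auto
        then show "mu u = lam u + (\<Sum>i=m+(u-1)*(n-1)+1..m+u*(n-1). lam i)"
          using H e[of i] by simp
      qed
    qed
  qed
  have V: "(\<forall>v\<in>{2..n}. nu v = (\<Sum>i=0..m-1. lam (m + (n-1)*i + v - 1)))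
        \<longleftrightarrow> (\<forall>j\<in>{1..n-1}. \<beta> j = 0)"
  proof -
    have e: "(nu (Suc j) = (\<Sum>i=0..m-1. lam (m + (n-1)*i + Suc j - 1))) \<longleftrightarrow> \<beta> j = 0" for j
    proof -
      have "{0..m-1} = {..<m}" using m0 by auto
      then have "(\<Sum>i=0..m-1. lam (m + (n-1)*i + Suc j - 1)) = (\<Sum>i<m. lam (m+i*(n-1)+j))"
        by (simp add: algebra_simps)
      then show ?thesis unfolding \<beta>_def Cw_def by (simp flip: of_nat_sum)
    qed
    show ?thesis
    proof
      assume H: "\<forall>v\<in>{2..n}. nu v = (\<Sum>i=0..m-1. lam (m + (n-1)*i + v - 1))"
      show "\<forall>j\<in>{1..n-1}. \<beta> j = 0"
      proof
        fix j assume j: "j \<in> {1..n-1}"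
        then have "Suc j \<in> {2..n}" using n0 by auto
        then show "\<beta> j = 0" using H e[of j] by simp
      qed
    next
      assume H: "\<forall>j\<in>{1..n-1}. \<beta> j = 0"
      show "\<forall>v\<in>{2..n}. nu v = (\<Sum>i=0..m-1. lam (m + (n-1)*i + v - 1))"
      proof
        fix v assume v: "v \<in> {2..n}"
        then obtain j where j: "v = Suc j" "j \<in> {1..n-1}" by (cases v) auto
        then show "nu v = (\<Sum>i=0..m-1. lam (m + (n-1)*i + v - 1))"
          using H e[of j] by simp
      qed
    qed
  qed
  have A: "(\<forall>i<m. int (mu (i+1)) = Rw m n lam i) \<longleftrightarrow> (\<forall>i\<in>{1..m-1}. \<alpha> i = 0)"
  proof
    assume "\<forall>i<m. int (mu (i+1)) = Rw m n lam i"
    then show "\<forall>i\<in>{1..m-1}. \<alpha> i = 0" unfolding \<alpha>_def by auto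
  next
    assume H: "\<forall>i\<in>{1..m-1}. \<alpha> i = 0"
    then have "(\<Sum>i=1..m-1. int (mu (i+1))) = (\<Sum>i=1..m-1. Rw m n lam i)"
      unfolding \<alpha>_def by (intro sum.cong) auto
    then have "int (mu 1) = Rw m n lam 0" using mu_split R_split tm T1 by simp
    show "\<forall>i<m. int (mu (i+1)) = Rw m n lam i"
    proof (intro allI impI)
      fix i assume i: "i < m"
      show "int (mu (i+1)) = Rw m n lam i"
      proof (cases "i = 0")
        case True then show ?thesis using \<open>int (mu 1) = Rw m n lam 0\<close> by simp
      next
        case False
        then have "i \<in> {1..m-1}" using i by auto
        then show ?thesis using H unfolding \<alpha>_def by simp
      qed
    qed
  qed
  have B: "(\<forall>j\<in>{1..n-1}. \<beta> j = 0) \<Longrightarrow> nu 1 = (\<Sum>i=1..m. lam i)"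
  proof -
    assume H: "\<forall>j\<in>{1..n-1}. \<beta> j = 0"
    then have "(\<Sum>j=1..n-1. int (nu (j+1))) = (\<Sum>j=1..n-1. Cw m n lam j)"
      unfolding \<beta>_def by (intro sum.cong) auto
    then have "int (nu 1) = (\<Sum>k=1..m. int (lam k))" using nu_split tn T2 by simp
    then show ?thesis by (simp flip: of_nat_sum)
  qed
  show ?thesis using L U V A B by blast
qed

end
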